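(* Let $(\mathcal{X},d_0)$ be a compact metric space with $d_0\le1$, let $l\in\mathbb{N}$, $1\le p<\infty$, and let $K:\mathbb{Z}_+\times\mathcal{X}^l\to[0,1]$ be symmetric in its last $l$ arguments and satisfy $$|K(m;u_1,\dots,u_l)-K(m;v_1,\dots,v_l)|\le\frac1l\sum_{i=1}^l d_0(u_i,v_i)$$ for all $m\in\mathbb{Z}_+$ and $u_i,v_i\in\mathcal{X}$. For $\xi=\sum_{i=1}^n\delta_{x_i}$ with $n\ge l$ let $\overline{K}(\xi)=\frac1{\binom nl}\sum_{1\le i_1<\dots<i_l\le n}K(n;x_{i_1},\dots,x_{i_l})$, and define $f:\mathfrak{N}\to[0,1]$ by $$f(\xi)=\Big(\frac1{\binom nl}\sum_{1\le i_1<\dots<i_l\le n}\big|K(n;x_{i_1},\dots,x_{i_l})-\overline{K}(\xi)\big|^p\Big)^{1/p}$$ for such $\xi$, and $f(\xi)=0$ if $|\xi|<l$. Then $|f(\xi)-f(\eta)|\le 2\,d_1^{(p)}(\xi,\eta)$ for all $\xi,\eta\in\mathfrak{N}$.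
   Context: $\mathfrak{N}$ is the space of finite point measures on $\mathcal{X}$; $|\xi|$ is the total mass. $\Pi_n$ is the set of permutations of $\{1,\dots,n\}$. For $\xi=\sum_{i=1}^{|\xi|}\delta_{x_i}$, $\eta=\sum_{i=1}^{|\eta|}\delta_{y_i}$: $d_1^{(p)}(\xi,\eta)=\min_{\pi\in\Pi_n}\big(\frac1n\sum_{i=1}^n d_0(x_i,y_{\pi(i)})^p\big)^{1/p}$ if $|\xi|=|\eta|=n\ge1$, $=1$ if $|\xi|\ne|\eta|$, $=0$ if $|\xi|=|\eta|=0$. *)

theory Defs
  imports "HOL-Analysis.Analysis" "HOL-Library.Multiset" "HOL-Combinatorics.Permutations"
begin

text \<open>Finite point measures on X are finite multisets over X; |xi| = size xi.
  A point measure is enumerated by a list xs with mset xs = xi.\<close>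

definition enum_pts :: "'a multiset \<Rightarrow> 'a list" where
  "enum_pts xi = (SOME xs. mset xs = xi)"

definition lsubsets :: "nat \<Rightarrow> nat \<Rightarrow> nat set set" where
  "lsubsets n l = {S. S \<subseteq> {..<n} \<and> card S = l}"

definition sub_tuple :: "'a list \<Rightarrow> nat set \<Rightarrow> 'a list" where
  "sub_tuple xs S = map (\<lambda>i. xs ! i) (sorted_list_of_set S)"

definition Kbar_list :: "(nat \<Rightarrow> 'a list \<Rightarrow> real) \<Rightarrow> nat \<Rightarrow> 'a list \<Rightarrow> real" where
  "Kbar_list K l xs = (let n = length xs in
     (1 / real (n choose l)) * (\<Sum>S\<in>lsubsets n l. K n (sub_tuple xs S)))"

definition f_list :: "real \<Rightarrow> (nat \<Rightarrow> 'a list \<Rightarrow> real) \<Rightarrow> nat \<Rightarrow> 'a list \<Rightarrow> real" where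
  "f_list p K l xs = (let n = length xs in
     if n < l then 0
     else ((1 / real (n choose l)) *
            (\<Sum>S\<in>lsubsets n l. \<bar>K n (sub_tuple xs S) - Kbar_list K l xs\<bar> powr p)) powr (1 / p))"

definition f_pm :: "real \<Rightarrow> (nat \<Rightarrow> 'a list \<Rightarrow> real) \<Rightarrow> nat \<Rightarrow> 'a multiset \<Rightarrow> real" where
  "f_pm p K l xi = f_list p K l (enum_pts xi)"

definition d1p :: "real \<Rightarrow> 'a::metric_space multiset \<Rightarrow> 'a multiset \<Rightarrow> real" where
  "d1p p xi eta =
    (if size xi \<noteq> size eta then 1
     else if size xi = 0 then 0
     else (let n = size xi; xs = enum_pts xi; ys = enum_pts eta in
       Min ((\<lambda>\<pi>. ((1 / real n) * (\<Sum>i<n. dist (xs ! i) (ys ! \<pi> i) powr p)) powr (1 / p))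
              ` {\<pi>. \<pi> permutes {..<n}})))"

end

theory Submission imports Defs begin


definition pavg :: "real \<Rightarrow> 'b set \<Rightarrow> ('b \<Rightarrow> real) \<Rightarrow> real" where
  "pavg p I a = (1 / real (card I)) * (\<Sum>S\<in>I. \<bar>a S\<bar> powr p)"
definition pnorm :: "real \<Rightarrow> 'b set \<Rightarrow> ('b \<Rightarrow> real) \<Rightarrow> real" where
  "pnorm p I a = pavg p I a powr (1 / p)"

lemma pavg_nonneg: "pavg p I a \<ge> 0"
  unfolding pavg_def by (intro mult_nonneg_nonneg sum_nonneg) auto

lemma pnorm_nonneg: "pnorm p I a \<ge> 0"
  unfolding pnorm_def by simp

lemma pnorm_powr: "p > 0 \<Longrightarrow> pnorm p I a powr p = pavg p I a"
  unfolding pnorm_def using pavg_nonneg[of p I a] by (simp add: powr_powr powr_one)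

lemma powr_cvx:
  fixes x y u p :: real
  assumes p: "p \<ge> 1" and x: "x \<ge> 0" and y: "y \<ge> 0" and u: "0 \<le> u" "u \<le> 1"
  shows "(u * x + (1 - u) * y) powr p \<le> u * x powr p + (1 - u) * y powr p"
proof (cases "x > 0 \<and> y > 0")
  case True
  then show ?thesis using convex_onD[OF powr_convex[OF p], of u y x] u by (auto simp: add_ac)
next
  case False
  have k: "t powr p \<le> t" if "0 \<le> t" "t \<le> 1" for t :: real
  proof (cases "t = 0")
    case False
    then have "t powr p \<le> t powr 1" using that p by (intro powr_mono') auto
    then show ?thesis using that by (simp add: powr_one)
  qed simp
  have p0: "p \<noteq> 0" using p by auto
  show ?thesis
  proof (cases "x = 0")
    case True
    have "((1 - u) * y) powr p = (1-u) powr p * y powr p" using u y by (simp add: powr_mult)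
    also have "\<dots> \<le> (1 - u) * y powr p" using k[of "1-u"] u by (intro mult_right_mono) auto
    finally show ?thesis using True p0 by simp
  next
    case False
    then have "y = 0" using \<open>\<not> (x > 0 \<and> y > 0)\<close> x y by auto
    have "(u * x) powr p = u powr p * x powr p" using u x by (simp add: powr_mult)
    also have "\<dots> \<le> u * x powr p" using k[of u] u by (intro mult_right_mono) auto
    finally show ?thesis using \<open>y = 0\<close> p0 by simp
  qed
qed

lemma powr_convex0: "p \<ge> 1 \<Longrightarrow> convex_on {0..} (\<lambda>x::real. x powr p)"
  unfolding convex_on_def
  apply (auto intro: convex_real_interval)
  subgoal for x y u v using powr_cvx[of p x y u] by (auto simp: eq_diff_eq[symmetric] add.commute[of u v])
  done

lemma pnorm_zero:
  assumes "finite I" "p > 0" "pnorm p I a = 0" "S \<in> I"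
  shows "a S = 0"
proof -
  have "I \<noteq> {}" using assms by auto
  then have c: "real (card I) > 0" using assms by (simp add: card_gt_0_iff)
  have "pavg p I a = 0" using pnorm_powr[of p I a] assms by simp
  then have "(\<Sum>S\<in>I. \<bar>a S\<bar> powr p) = 0" using c unfolding pavg_def by simp
  then have "\<bar>a S\<bar> powr p = 0" using assms sum_nonneg_eq_0_iff[of I "\<lambda>S. \<bar>a S\<bar> powr p"] by auto
  then show ?thesis by simp
qed

lemma pnorm_mono:
  assumes "p > 0" "\<And>S. S \<in> I \<Longrightarrow> \<bar>a S\<bar> \<le> \<bar>b S\<bar>"
  shows "pnorm p I a \<le> pnorm p I b"
proof -
  have "pavg p I a \<le> pavg p I b" unfolding pavg_def
    using assms by (intro mult_left_mono sum_mono powr_mono2) auto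
  then show ?thesis unfolding pnorm_def using pavg_nonneg[of p I a] assms
    by (intro powr_mono2) auto
qed

lemma pnorm_const:
  assumes "finite I" "I \<noteq> {}" "p > 0"
  shows "pnorm p I (\<lambda>_. c) = \<bar>c\<bar>"
  using assms unfolding pnorm_def pavg_def by (simp add: powr_powr)

lemma pnorm_mink:
  assumes I: "finite I" "I \<noteq> {}" and p: "p \<ge> 1"
  shows "pnorm p I (\<lambda>S. a S + b S) \<le> pnorm p I a + pnorm p I b"
proof -
  define A where "A = pnorm p I a"
  define B where "B = pnorm p I b"
  have p0: "p > 0" using p by auto
  have A0: "A \<ge> 0" "B \<ge> 0" unfolding A_def B_def by (auto simp: pnorm_nonneg)
  show ?thesis
  proof (cases "A = 0 \<or> B = 0")
    case True
    then show ?thesis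
    proof
      assume "A = 0"
      then have "\<And>S. S \<in> I \<Longrightarrow> a S = 0" using pnorm_zero[OF I(1) p0] A_def by auto
      then have "pnorm p I (\<lambda>S. a S + b S) = pnorm p I b" unfolding pnorm_def pavg_def by simp
      then show ?thesis using \<open>A = 0\<close> A_def by simp
    next
      assume "B = 0"
      then have "\<And>S. S \<in> I \<Longrightarrow> b S = 0" using pnorm_zero[OF I(1) p0] B_def by auto
      then have "pnorm p I (\<lambda>S. a S + b S) = pnorm p I a" unfolding pnorm_def pavg_def by simp
      then show ?thesis using \<open>B = 0\<close> B_def by simp
    qed
  next
    case False
    then have Ap: "A > 0" "B > 0" using A0 by auto
    define u where "u = A / (A + B)"
    have u: "0 \<le> u" "u \<le> 1" "1 - u = B / (A + B)" using Ap unfolding u_def by (auto simp: field_simps)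
    have pt: "(\<bar>a S + b S\<bar> / (A + B)) powr p \<le> u * (\<bar>a S\<bar> / A) powr p + (1 - u) * (\<bar>b S\<bar> / B) powr p" for S
    proof -
      have e: "u * (\<bar>a S\<bar> / A) + (1 - u) * (\<bar>b S\<bar> / B) = (\<bar>a S\<bar> + \<bar>b S\<bar>) / (A + B)"
      proof -
        have "A / (A + B) * (\<bar>a S\<bar> / A) = \<bar>a S\<bar> / (A + B)" using Ap by simp
        moreover have "B / (A + B) * (\<bar>b S\<bar> / B) = \<bar>b S\<bar> / (A + B)" using Ap by simp
        ultimately show ?thesis unfolding u(3) unfolding u_def by (simp add: add_divide_distrib)
      qed
      have "\<bar>a S + b S\<bar> / (A + B) \<le> (\<bar>a S\<bar> + \<bar>b S\<bar>) / (A + B)"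
        using Ap by (intro divide_right_mono abs_triangle_ineq) auto
      then have "\<bar>a S + b S\<bar> / (A + B) \<le> u * (\<bar>a S\<bar> / A) + (1 - u) * (\<bar>b S\<bar> / B)"
        using e by simp
      then have "(\<bar>a S + b S\<bar> / (A + B)) powr p \<le> (u * (\<bar>a S\<bar> / A) + (1 - u) * (\<bar>b S\<bar> / B)) powr p"
        using p0 Ap by (intro powr_mono2) auto
      also have "\<dots> \<le> u * (\<bar>a S\<bar> / A) powr p + (1 - u) * (\<bar>b S\<bar> / B) powr p"
        using powr_cvx[OF p _ _ u(1,2), of "\<bar>a S\<bar> / A" "\<bar>b S\<bar> / B"] Ap by simp
      finally show ?thesis .
    qed
    have c: "real (card I) > 0" using I by (simp add: card_gt_0_iff)
    have eA: "pavg p I a = A powr p" and eB: "pavg p I b = B powr p"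
      using pnorm_powr[OF p0] A_def B_def by metis+
    have "pavg p I (\<lambda>S. a S + b S) / (A + B) powr p = (1 / real (card I)) * (\<Sum>S\<in>I. (\<bar>a S + b S\<bar> / (A + B)) powr p)"
      unfolding pavg_def using Ap by (simp add: powr_divide sum_divide_distrib mult_ac)
    also have "\<dots> \<le> (1 / real (card I)) * (\<Sum>S\<in>I. u * (\<bar>a S\<bar> / A) powr p + (1 - u) * (\<bar>b S\<bar> / B) powr p)"
      using c by (intro mult_left_mono sum_mono pt) auto
    also have "\<dots> = u * (pavg p I a / A powr p) + (1 - u) * (pavg p I b / B powr p)"
    proof -
      have "(\<lambda>S. u * (\<bar>a S\<bar> / A) powr p + (1 - u) * (\<bar>b S\<bar> / B) powr p)
          = (\<lambda>S. (u / A powr p) * \<bar>a S\<bar> powr p + ((1 - u) / B powr p) * \<bar>b S\<bar> powr p)"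
        using Ap by (simp add: powr_divide)
      note eq = this
      have "(\<Sum>S\<in>I. u * (\<bar>a S\<bar> / A) powr p + (1 - u) * (\<bar>b S\<bar> / B) powr p)
          = (u / A powr p) * (\<Sum>S\<in>I. \<bar>a S\<bar> powr p) + ((1 - u) / B powr p) * (\<Sum>S\<in>I. \<bar>b S\<bar> powr p)"
        by (subst eq) (simp only: sum.distrib sum_distrib_left)
      then show ?thesis unfolding pavg_def using c Ap by (simp add: divide_simps)
    qed
    also have "\<dots> = 1" using eA eB Ap by simp
    finally have "pavg p I (\<lambda>S. a S + b S) \<le> (A + B) powr p" using Ap by (simp add: divide_le_eq)
    then have "pavg p I (\<lambda>S. a S + b S) powr (1/p) \<le> ((A + B) powr p) powr (1/p)"
      using pavg_nonneg p0 by (intro powr_mono2) auto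
    also have "\<dots> = A + B" using Ap p0 by (simp add: powr_powr)
    finally show ?thesis unfolding pnorm_def A_def B_def .
  qed
qed

lemma pnorm_jensen:
  assumes I: "finite I" "I \<noteq> {}" and p: "p \<ge> 1"
  shows "(1 / real (card I)) * (\<Sum>S\<in>I. \<bar>a S\<bar>) \<le> pnorm p I a"
proof -
  have c: "real (card I) > 0" using I by (simp add: card_gt_0_iff)
  have "((\<Sum>S\<in>I. (1 / real (card I)) *\<^sub>R \<bar>a S\<bar>)) powr p \<le> (\<Sum>S\<in>I. (1 / real (card I)) * \<bar>a S\<bar> powr p)"
    using c I by (intro convex_on_sum[OF I powr_convex0[OF p]]) auto
  then have "((1 / real (card I)) * (\<Sum>S\<in>I. \<bar>a S\<bar>)) powr p \<le> pavg p I a"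
    unfolding pavg_def by (simp add: sum_distrib_left)
  then have "(((1 / real (card I)) * (\<Sum>S\<in>I. \<bar>a S\<bar>)) powr p) powr (1/p) \<le> pavg p I a powr (1/p)"
    using p by (intro powr_mono2) auto
  moreover have "(((1 / real (card I)) * (\<Sum>S\<in>I. \<bar>a S\<bar>)) powr p) powr (1/p) = (1 / real (card I)) * (\<Sum>S\<in>I. \<bar>a S\<bar>)"
    using p c by (simp add: powr_powr sum_nonneg)
  ultimately show ?thesis unfolding pnorm_def by simp
qed




lemma finite_lsubsets: "finite (lsubsets n l)"
  unfolding lsubsets_def by (rule finite_subset[of _ "Pow {..<n}"]) auto

lemma card_lsubsets: "card (lsubsets n l) = n choose l"
  unfolding lsubsets_def using n_subsets[of "{..<n}" l] by simp

lemma lsubsets_ne: "l \<le> n \<Longrightarrow> lsubsets n l \<noteq> {}"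
  using card_lsubsets[of n l] by (metis card.empty zero_less_binomial_iff neq0_conv)

lemma lsubsets_cardI: "l \<le> n \<Longrightarrow> real (card (lsubsets n l)) > 0"
  using card_lsubsets[of n l] by simp

lemma sub_tuple_length: "S \<in> lsubsets n l \<Longrightarrow> length (sub_tuple xs S) = l"
  unfolding sub_tuple_def lsubsets_def by auto

lemma sub_tuple_set: "S \<in> lsubsets n l \<Longrightarrow> length xs = n \<Longrightarrow> set (sub_tuple xs S) \<subseteq> set xs"
  unfolding sub_tuple_def lsubsets_def
  using finite_subset[of S "{..<n}"] by auto

lemma sub_tuple_nth: "S \<in> lsubsets n l \<Longrightarrow> j < l \<Longrightarrow> sub_tuple xs S ! j = xs ! (sorted_list_of_set S ! j)"
  unfolding sub_tuple_def lsubsets_def by auto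

lemma sum_sorted_nth:
  assumes "finite S"
  shows "(\<Sum>j<card S. g (sorted_list_of_set S ! j)) = (\<Sum>i\<in>S. g i)"
proof -
  have "(\<Sum>i\<in>S. g i) = sum_list (map g (sorted_list_of_set S))"
    using sum.distinct_set_conv_list[of "sorted_list_of_set S" g] assms by simp
  also have "\<dots> = (\<Sum>j<card S. g (sorted_list_of_set S ! j))"
    by (simp add: sum_list_sum_nth atLeast0LessThan)
  finally show ?thesis by simp
qed

lemma card_containing:
  assumes "i < n" "l \<ge> 1"
  shows "card {S \<in> lsubsets n l. i \<in> S} = (n - 1) choose (l - 1)"
proof -
  have eq: "{S \<in> lsubsets n l. i \<in> S} = insert i ` {T. T \<subseteq> {..<n} - {i} \<and> card T = l - 1}"
  proof (intro equalityI subsetI)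
    fix S assume S: "S \<in> {S \<in> lsubsets n l. i \<in> S}"
    then have fS: "finite S" unfolding lsubsets_def using finite_subset by auto
    have "S = insert i (S - {i})" using S by auto
    moreover have "S - {i} \<subseteq> {..<n} - {i} \<and> card (S - {i}) = l - 1"
      using S fS unfolding lsubsets_def by auto
    ultimately show "S \<in> insert i ` {T. T \<subseteq> {..<n} - {i} \<and> card T = l - 1}" by blast
  next
    fix S assume "S \<in> insert i ` {T. T \<subseteq> {..<n} - {i} \<and> card T = l - 1}"
    then obtain T where T: "T \<subseteq> {..<n} - {i}" "card T = l - 1" "S = insert i T" by auto
    have "finite T" using T(1) finite_subset by blast
    moreover have "i \<notin> T" using T(1) by auto
    ultimately have "card S = l" using T assms by auto
    then show "S \<in> {S \<in> lsubsets n l. i \<in> S}" using T assms unfolding lsubsets_def by auto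
  qed
  have inj: "inj_on (insert i) {T. T \<subseteq> {..<n} - {i} \<and> card T = l - 1}"
    by (rule inj_onI) blast
  have "card {S \<in> lsubsets n l. i \<in> S} = card {T. T \<subseteq> {..<n} - {i} \<and> card T = l - 1}"
    unfolding eq by (rule card_image[OF inj])
  also have "\<dots> = card ({..<n} - {i}) choose (l - 1)" by (rule n_subsets) simp
  also have "card ({..<n} - {i}) = n - 1" using assms by simp
  finally show ?thesis .
qed

lemma double_count:
  assumes "l \<ge> 1"
  shows "(\<Sum>S\<in>lsubsets n l. \<Sum>i\<in>S. g i) = real ((n - 1) choose (l - 1)) * (\<Sum>i<n. g i)"
proof -
  have "(\<Sum>S\<in>lsubsets n l. \<Sum>i\<in>S. g i) = (\<Sum>S\<in>lsubsets n l. \<Sum>i\<in>{i. i \<in> {..<n} \<and> i \<in> S}. g i)"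
    by (intro sum.cong refl) (auto simp: lsubsets_def)
  also have "\<dots> = (\<Sum>i<n. \<Sum>S\<in>{S. S \<in> lsubsets n l \<and> i \<in> S}. g i)"
    by (rule sum.swap_restrict) (auto simp: finite_lsubsets)
  also have "\<dots> = (\<Sum>i<n. real ((n - 1) choose (l - 1)) * g i)"
    using card_containing[OF _ assms] by (intro sum.cong refl) simp
  finally show ?thesis by (simp add: sum_distrib_left)
qed

lemma choose_id: "l \<ge> 1 \<Longrightarrow> n \<ge> 1 \<Longrightarrow> real (n choose l) * real l = real n * real ((n - 1) choose (l - 1))"
  using Suc_times_binomial_eq[of "n - 1" "l - 1"]
  by (metis One_nat_def Suc_pred' less_eq_Suc_le of_nat_mult mult.commute)

lemma image_perm_bij:
  assumes "\<pi> permutes {..<n}"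
  shows "bij_betw (image \<pi>) (lsubsets n l) (lsubsets n l)"
proof -
  have inj: "inj \<pi>" using permutes_inj[OF assms] .
  have im: "\<pi> ` S \<in> lsubsets n l" if "S \<in> lsubsets n l" "\<sigma> permutes {..<n}" "inj \<sigma>" for S \<sigma>
  proof -
    have "\<pi> ` {..<n} = {..<n}" using permutes_image[OF assms] .
    then show ?thesis using that inj card_image[of \<pi> S] inj_on_subset[OF inj subset_UNIV]
      unfolding lsubsets_def by (auto intro: permutes_image)
  qed
  show ?thesis
  proof (rule bij_betwI[where g = "image (inv \<pi>)"])
    show "image \<pi> \<in> lsubsets n l \<rightarrow> lsubsets n l" using im assms inj by auto
    show "image (inv \<pi>) \<in> lsubsets n l \<rightarrow> lsubsets n l"
    proof
      fix S assume S: "S \<in> lsubsets n l"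
      have ip: "inv \<pi> permutes {..<n}" by (rule permutes_inv[OF assms])
      have ii: "inj (inv \<pi>)" using permutes_inj[OF ip] .
      have "inv \<pi> ` {..<n} = {..<n}" using permutes_image[OF ip] .
      then show "inv \<pi> ` S \<in> lsubsets n l" using S ii card_image[of "inv \<pi>" S] inj_on_subset[OF ii subset_UNIV]
        unfolding lsubsets_def by auto
    qed
    show "\<And>x. x \<in> lsubsets n l \<Longrightarrow> inv \<pi> ` \<pi> ` x = x" using inj by (simp add: image_image)
    show "\<And>y. y \<in> lsubsets n l \<Longrightarrow> \<pi> ` inv \<pi> ` y = y"
      using permutes_surj[OF assms] by (simp add: image_image surj_f_inv_f)
  qed
qed




locale setting =
  fixes X :: "'a::metric_space set" and l :: nat and p :: real and K :: "nat \<Rightarrow> 'a list \<Rightarrow> real"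
  assumes l_pos: "l \<ge> 1"
    and p_ge1: "p \<ge> 1"
    and K_range: "\<And>m us. m \<ge> 1 \<Longrightarrow> length us = l \<Longrightarrow> set us \<subseteq> X \<Longrightarrow>
                     0 \<le> K m us \<and> K m us \<le> 1"
    and K_sym: "\<And>m us vs. m \<ge> 1 \<Longrightarrow> length us = l \<Longrightarrow> set us \<subseteq> X \<Longrightarrow>
                     mset vs = mset us \<Longrightarrow> K m vs = K m us"
    and K_lip: "\<And>m us vs. m \<ge> 1 \<Longrightarrow> length us = l \<Longrightarrow> length vs = l \<Longrightarrow>
                     set us \<subseteq> X \<Longrightarrow> set vs \<subseteq> X \<Longrightarrow>
                     \<bar>K m us - K m vs\<bar> \<le> (1 / real l) * (\<Sum>i<l. dist (us ! i) (vs ! i))"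
begin

lemma p0: "p > 0" using p_ge1 by auto

lemma Kbar_eq: "Kbar_list K l xs = (1 / real (card (lsubsets (length xs) l))) *
    (\<Sum>S\<in>lsubsets (length xs) l. K (length xs) (sub_tuple xs S))"
  unfolding Kbar_list_def card_lsubsets Let_def ..

lemma f_pnorm: "length xs \<ge> l \<Longrightarrow> f_list p K l xs =
   pnorm p (lsubsets (length xs) l) (\<lambda>S. K (length xs) (sub_tuple xs S) - Kbar_list K l xs)"
  unfolding f_list_def pnorm_def pavg_def card_lsubsets Let_def by simp

lemma K_in: "length xs \<ge> l \<Longrightarrow> set xs \<subseteq> X \<Longrightarrow> S \<in> lsubsets (length xs) l \<Longrightarrow>
    0 \<le> K (length xs) (sub_tuple xs S) \<and> K (length xs) (sub_tuple xs S) \<le> 1"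
  using K_range[of "length xs" "sub_tuple xs S"] sub_tuple_length[of S "length xs" l xs]
    sub_tuple_set[of S "length xs" l xs] l_pos by auto

lemma Kbar_in:
  assumes "length xs \<ge> l" "set xs \<subseteq> X"
  shows "0 \<le> Kbar_list K l xs \<and> Kbar_list K l xs \<le> 1"
proof -
  let ?I = "lsubsets (length xs) l"
  have c: "real (card ?I) > 0" using lsubsets_cardI[OF assms(1)] .
  have "(\<Sum>S\<in>?I. K (length xs) (sub_tuple xs S)) \<le> (\<Sum>S\<in>?I. 1)"
    using K_in[OF assms] by (intro sum_mono) auto
  moreover have "(\<Sum>S\<in>?I. K (length xs) (sub_tuple xs S)) \<ge> 0"
    using K_in[OF assms] by (intro sum_nonneg) auto
  ultimately show ?thesis unfolding Kbar_eq using c by (auto simp: divide_simps)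
qed

lemma f_in:
  assumes "set xs \<subseteq> X"
  shows "0 \<le> f_list p K l xs \<and> f_list p K l xs \<le> 1"
proof (cases "length xs < l")
  case True then show ?thesis unfolding f_list_def by simp
next
  case False
  then have L: "length xs \<ge> l" by simp
  let ?I = "lsubsets (length xs) l"
  have "pnorm p ?I (\<lambda>S. K (length xs) (sub_tuple xs S) - Kbar_list K l xs) \<le> pnorm p ?I (\<lambda>_. 1)"
  proof (rule pnorm_mono[OF p0])
    fix S assume S: "S \<in> ?I"
    show "\<bar>K (length xs) (sub_tuple xs S) - Kbar_list K l xs\<bar> \<le> \<bar>1\<bar>"
      using K_in[OF L assms S] Kbar_in[OF L assms] by (simp add: abs_le_iff)
  qed
  also have "\<dots> = 1" using pnorm_const[OF finite_lsubsets lsubsets_ne[OF L] p0] by simp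
  finally show ?thesis using f_pnorm[OF L] pnorm_nonneg by simp
qed

lemma perm_sum:
  assumes "\<pi> permutes {..<length ys}" "length ys \<ge> l" "set ys \<subseteq> X"
  defines "ys' \<equiv> map (\<lambda>i. ys ! \<pi> i) [0..<length ys]"
  shows "(\<Sum>S\<in>lsubsets (length ys) l. G (K (length ys) (sub_tuple ys' S))) =
         (\<Sum>S\<in>lsubsets (length ys) l. G (K (length ys) (sub_tuple ys S)))"
proof -
  let ?n = "length ys"
  let ?I = "lsubsets ?n l"
  have inj: "inj \<pi>" using permutes_inj[OF assms(1)] .
  have eq: "K ?n (sub_tuple ys' S) = K ?n (sub_tuple ys (\<pi> ` S))" if S: "S \<in> ?I" for S
  proof -
    have PS: "\<pi> ` S \<in> ?I" using image_perm_bij[OF assms(1)] S by (meson bij_betwE)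
    have fS: "finite S" using S unfolding lsubsets_def using finite_subset by auto
    have Sn: "\<forall>i\<in>S. i < ?n" using S unfolding lsubsets_def by auto
    have "mset (sub_tuple ys' S) = image_mset (\<lambda>i. ys ! \<pi> i) (mset_set S)"
    proof -
      have "map (\<lambda>i. ys' ! i) (sorted_list_of_set S) = map (\<lambda>i. ys ! \<pi> i) (sorted_list_of_set S)"
        using fS Sn unfolding ys'_def by (intro map_cong) auto
      then show ?thesis unfolding sub_tuple_def by (metis mset_map mset_sorted_list_of_multiset sorted_list_of_mset_set)
    qed
    also have "\<dots> = image_mset (\<lambda>i. ys ! i) (image_mset \<pi> (mset_set S))"
      by (simp add: multiset.map_comp comp_def)
    also have "\<dots> = image_mset (\<lambda>i. ys ! i) (mset_set (\<pi> ` S))"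
      using image_mset_mset_set[OF inj_on_subset[OF inj subset_UNIV, of S]] by simp
    also have "\<dots> = mset (sub_tuple ys (\<pi> ` S))"
      unfolding sub_tuple_def using fS by (metis mset_map mset_sorted_list_of_multiset sorted_list_of_mset_set)
    finally show ?thesis
      using K_sym[of ?n "sub_tuple ys (\<pi> ` S)" "sub_tuple ys' S"] sub_tuple_length[OF PS]
        sub_tuple_set[OF PS] assms(2,3) l_pos by auto
  qed
  have "(\<Sum>S\<in>?I. G (K ?n (sub_tuple ys' S))) = (\<Sum>S\<in>?I. G (K ?n (sub_tuple ys (\<pi> ` S))))"
    using eq by (intro sum.cong) auto
  also have "\<dots> = (\<Sum>S\<in>?I. G (K ?n (sub_tuple ys S)))"
    by (rule sum.reindex_bij_betw[OF image_perm_bij[OF assms(1)]])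
  finally show ?thesis .
qed

lemma perm_f:
  assumes "\<pi> permutes {..<length ys}" "set ys \<subseteq> X"
  defines "ys' \<equiv> map (\<lambda>i. ys ! \<pi> i) [0..<length ys]"
  shows "f_list p K l ys' = f_list p K l ys"
proof (cases "length ys < l")
  case True
  then show ?thesis unfolding f_list_def ys'_def by simp
next
  case False
  then have L: "length ys \<ge> l" by simp
  have len: "length ys' = length ys" unfolding ys'_def by simp
  have kb: "Kbar_list K l ys' = Kbar_list K l ys"
    unfolding Kbar_eq len using perm_sum[OF assms(1) L assms(2), of "\<lambda>x. x"] unfolding ys'_def by simp
  show ?thesis
    unfolding f_list_def Let_def len kb
    using perm_sum[OF assms(1) L assms(2), of "\<lambda>x. \<bar>x - Kbar_list K l ys\<bar> powr p"] unfolding ys'_def by simp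
qed

end



context setting begin

lemma pnorm_uminus: "pnorm p I (\<lambda>S. - a S) = pnorm p I a"
  unfolding pnorm_def pavg_def by simp

lemma main_list:
  assumes lx: "length xs = n" and ly: "length ys = n" and nl: "n \<ge> l"
    and sx: "set xs \<subseteq> X" and sy: "set ys \<subseteq> X"
  shows "\<bar>f_list p K l xs - f_list p K l ys\<bar> \<le>
           2 * ((1 / real n) * (\<Sum>i<n. dist (xs ! i) (ys ! i) powr p)) powr (1 / p)"
proof -
  define I where "I = lsubsets n l"
  have fI: "finite I" and neI: "I \<noteq> {}" and cI: "real (card I) > 0"
    unfolding I_def using finite_lsubsets lsubsets_ne[OF nl] lsubsets_cardI[OF nl] by auto
  have n1: "n \<ge> 1" using nl l_pos by simp
  define kx where "kx S = K n (sub_tuple xs S)" for S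
  define ky where "ky S = K n (sub_tuple ys S)" for S
  define Kx where "Kx = Kbar_list K l xs"
  define Ky where "Ky = Kbar_list K l ys"
  define a where "a S = kx S - Kx" for S
  define b where "b S = ky S - Ky" for S
  define c where "c S = kx S - ky S" for S
  define m where "m = Kx - Ky"
  define N where "N = pnorm p I"
  have p1: "p \<ge> 1" by (rule p_ge1)
  have fx: "f_list p K l xs = N a" unfolding N_def a_def kx_def Kx_def I_def
    using f_pnorm[of xs] lx nl by simp
  have fy: "f_list p K l ys = N b" unfolding N_def b_def ky_def Ky_def I_def
    using f_pnorm[of ys] ly nl by simp
  have m_eq: "m = (1 / real (card I)) * (\<Sum>S\<in>I. c S)"
    unfolding m_def Kx_def Ky_def Kbar_eq lx ly c_def kx_def ky_def I_def
    by (simp add: sum_subtractf right_diff_distrib)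
  have cm: "N (\<lambda>S. c S - m) \<le> N c + \<bar>m\<bar>"
  proof -
    have "N (\<lambda>S. c S + (- m)) \<le> N c + N (\<lambda>_. - m)"
      unfolding N_def by (rule pnorm_mink[OF fI neI p1])
    then show ?thesis unfolding N_def using pnorm_const[OF fI neI p0, of "-m"] by simp
  qed
  have mN: "\<bar>m\<bar> \<le> N c"
  proof -
    have "\<bar>m\<bar> = (1 / real (card I)) * \<bar>\<Sum>S\<in>I. c S\<bar>" unfolding m_eq using cI by (simp add: abs_mult)
    also have "\<dots> \<le> (1 / real (card I)) * (\<Sum>S\<in>I. \<bar>c S\<bar>)"
      using cI by (intro mult_left_mono sum_abs) auto
    also have "\<dots> \<le> N c" unfolding N_def by (rule pnorm_jensen[OF fI neI p1])
    finally show ?thesis .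
  qed
  have ab: "N a \<le> N b + N (\<lambda>S. c S - m)"
  proof -
    have "a = (\<lambda>S. b S + (c S - m))" unfolding a_def b_def c_def m_def by (auto simp: fun_eq_iff)
    then show ?thesis unfolding N_def using pnorm_mink[OF fI neI p1, of b "\<lambda>S. c S - m"] by simp
  qed
  have ba: "N b \<le> N a + N (\<lambda>S. c S - m)"
  proof -
    have "b = (\<lambda>S. a S + (- (c S - m)))" unfolding a_def b_def c_def m_def by (auto simp: fun_eq_iff)
    then show ?thesis unfolding N_def using pnorm_mink[OF fI neI p1, of a "\<lambda>S. - (c S - m)"]
      pnorm_uminus[of I "\<lambda>S. c S - m"] by simp
  qed
  have step1: "\<bar>f_list p K l xs - f_list p K l ys\<bar> \<le> 2 * N c"
    unfolding fx fy using ab ba cm mN by linarith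
  define d where "d i = dist (xs ! i) (ys ! i)" for i
  define dv where "dv S = (1 / real l) * (\<Sum>i\<in>S. d i)" for S
  have cdv: "N c \<le> N dv"
    unfolding N_def
  proof (rule pnorm_mono[OF p0])
    fix S assume S: "S \<in> I"
    have SI: "S \<in> lsubsets n l" using S I_def by simp
    have fS: "finite S" and cS: "card S = l" using SI unfolding lsubsets_def using finite_subset by auto
    have len1: "length (sub_tuple xs S) = l" "length (sub_tuple ys S) = l"
      using sub_tuple_length[OF SI] by auto
    have st1: "set (sub_tuple xs S) \<subseteq> X" "set (sub_tuple ys S) \<subseteq> X"
      using sub_tuple_set[OF SI lx] sub_tuple_set[OF SI ly] sx sy by auto
    have "\<bar>c S\<bar> \<le> (1 / real l) * (\<Sum>j<l. dist (sub_tuple xs S ! j) (sub_tuple ys S ! j))"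
      unfolding c_def kx_def ky_def using K_lip[OF n1 len1 st1] .
    also have "(\<Sum>j<l. dist (sub_tuple xs S ! j) (sub_tuple ys S ! j)) = (\<Sum>j<card S. d (sorted_list_of_set S ! j))"
    proof (rule sum.cong)
      show "{..<l} = {..<card S}" using cS by simp
      fix j assume "j \<in> {..<card S}"
      then have j: "j < l" using cS by simp
      show "dist (sub_tuple xs S ! j) (sub_tuple ys S ! j) = d (sorted_list_of_set S ! j)"
        unfolding d_def sub_tuple_nth[OF SI j] ..
    qed
    also have "\<dots> = (\<Sum>i\<in>S. d i)" by (rule sum_sorted_nth[OF fS])
    finally have "\<bar>c S\<bar> \<le> dv S" unfolding dv_def .
    then show "\<bar>c S\<bar> \<le> \<bar>dv S\<bar>" by simp
  qed
  have dvD: "pavg p I dv \<le> (1 / real n) * (\<Sum>i<n. d i powr p)"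
  proof -
    have per: "\<bar>dv S\<bar> powr p \<le> (\<Sum>i\<in>S. (1 / real l) * d i powr p)" if S: "S \<in> I" for S
    proof -
      have SI: "S \<in> lsubsets n l" using S I_def by simp
      have fS: "finite S" and cS: "card S = l" using SI unfolding lsubsets_def using finite_subset by auto
      have neS: "S \<noteq> {}" using cS l_pos by auto
      have dvn: "dv S \<ge> 0" unfolding dv_def d_def by (simp add: sum_nonneg)
      have "(\<Sum>i\<in>S. (1 / real l) *\<^sub>R d i) powr p \<le> (\<Sum>i\<in>S. (1 / real l) * d i powr p)"
        using l_pos cS unfolding d_def by (intro convex_on_sum[OF fS neS powr_convex0[OF p1]]) auto
      then show ?thesis using dvn unfolding dv_def by (simp add: sum_distrib_left)
    qed
    have "pavg p I dv \<le> (1 / real (card I)) * (\<Sum>S\<in>I. \<Sum>i\<in>S. (1 / real l) * d i powr p)"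
      unfolding pavg_def using cI per by (intro mult_left_mono sum_mono) auto
    also have "\<dots> = (1 / real (card I)) * (real ((n - 1) choose (l - 1)) * (\<Sum>i<n. (1 / real l) * d i powr p))"
      unfolding I_def using double_count[OF l_pos] by simp
    also have "\<dots> = (real ((n - 1) choose (l - 1)) / (real (n choose l) * real l)) * (\<Sum>i<n. d i powr p)"
      unfolding I_def card_lsubsets by (simp add: sum_divide_distrib[symmetric])
    also have "real ((n - 1) choose (l - 1)) / (real (n choose l) * real l) = 1 / real n"
      using choose_id[OF l_pos n1] n1 cI unfolding I_def card_lsubsets
      by (simp add: divide_simps)
    finally show ?thesis .
  qed
  have "N dv \<le> ((1 / real n) * (\<Sum>i<n. d i powr p)) powr (1 / p)"
    unfolding N_def pnorm_def using dvD pavg_nonneg p0 by (intro powr_mono2) auto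
  then show ?thesis using step1 cdv unfolding d_def by linarith
qed

end



lemma enum_pts_mset: "mset (enum_pts xi) = xi"
  unfolding enum_pts_def by (rule someI_ex) (rule ex_mset)

theorem proposition2:
  fixes X :: "'a::metric_space set"
    and l :: nat and p :: real
    and K :: "nat \<Rightarrow> 'a list \<Rightarrow> real"
  assumes X_compact: "compact X"
    and d0_le1: "\<forall>x\<in>X. \<forall>y\<in>X. dist x y \<le> 1"
    and l_pos: "l \<ge> 1"
    and p_ge1: "p \<ge> 1"
    and K_range: "\<And>m us. m \<ge> 1 \<Longrightarrow> length us = l \<Longrightarrow> set us \<subseteq> X \<Longrightarrow>
                     0 \<le> K m us \<and> K m us \<le> 1"
    and K_sym: "\<And>m us vs. m \<ge> 1 \<Longrightarrow> length us = l \<Longrightarrow> set us \<subseteq> X \<Longrightarrow>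
                     mset vs = mset us \<Longrightarrow> K m vs = K m us"
    and K_lip: "\<And>m us vs. m \<ge> 1 \<Longrightarrow> length us = l \<Longrightarrow> length vs = l \<Longrightarrow>
                     set us \<subseteq> X \<Longrightarrow> set vs \<subseteq> X \<Longrightarrow>
                     \<bar>K m us - K m vs\<bar> \<le> (1 / real l) * (\<Sum>i<l. dist (us ! i) (vs ! i))"
    and xi_X: "set_mset xi \<subseteq> X"
    and eta_X: "set_mset eta \<subseteq> X"
  shows "\<bar>f_pm p K l xi - f_pm p K l eta\<bar> \<le> 2 * d1p p xi eta"
proof -
  interpret setting X l p K

    by (intro setting.intro l_pos p_ge1 K_range K_sym K_lip)
  define xs where "xs = enum_pts xi"
  define ys where "ys = enum_pts eta"
  have mx: "mset xs = xi" and my: "mset ys = eta" unfolding xs_def ys_def by (auto simp: enum_pts_mset)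
  have lx: "length xs = size xi" and ly: "length ys = size eta"
    using arg_cong[OF mx, of size] arg_cong[OF my, of size] by simp_all
  have sx: "set xs \<subseteq> X" and sy: "set ys \<subseteq> X" using arg_cong[OF mx, of set_mset] arg_cong[OF my, of set_mset] xi_X eta_X by simp_all
  have fx: "f_pm p K l xi = f_list p K l xs" and fy: "f_pm p K l eta = f_list p K l ys"
    unfolding f_pm_def xs_def ys_def by auto
  show ?thesis
  proof (cases "size xi = size eta")
    case False
    then have "d1p p xi eta = 1" unfolding d1p_def by simp
    then show ?thesis unfolding fx fy using f_in[OF sx] f_in[OF sy] by linarith
  next
    case True
    define n where "n = size xi"
    have lx': "length xs = n" and ly': "length ys = n" using lx ly True n_def by auto
    define D where "D = (\<lambda>\<pi>. ((1 / real n) * (\<Sum>i<n. dist (xs ! i) (ys ! \<pi> i) powr p)) powr (1 / p))"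
    define P where "P = {\<pi>. \<pi> permutes {..<n}}"
    have fP: "finite (D ` P)" unfolding P_def using finite_permutations[of "{..<n}"] by auto
    have neP: "D ` P \<noteq> {}" unfolding P_def using permutes_id[of "{..<n}"] by blast
    have d1: "n \<noteq> 0 \<Longrightarrow> d1p p xi eta = Min (D ` P)"
      unfolding d1p_def D_def P_def using True n_def xs_def ys_def by (simp add: Let_def)
    obtain \<pi> where pi: "\<pi> \<in> P" "Min (D ` P) = D \<pi>" using Min_in[OF fP neP] by auto
    show ?thesis
    proof (cases "n < l")
      case True
      then have "f_list p K l xs = 0" "f_list p K l ys = 0" unfolding f_list_def using lx' ly' by auto
      moreover have "d1p p xi eta \<ge> 0"
      proof (cases "n = 0")
        case True then show ?thesis unfolding d1p_def using \<open>size xi = size eta\<close> n_def by simp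
      next
        case False then show ?thesis using d1 pi unfolding D_def by simp
      qed
      ultimately show ?thesis unfolding fx fy by simp
    next
      case False
      then have nl: "n \<ge> l" by simp
      then have n0: "n \<noteq> 0" using l_pos by simp
      have perm: "\<pi> permutes {..<length ys}" using pi(1) ly' unfolding P_def by simp
      define ys' where "ys' = map (\<lambda>i. ys ! \<pi> i) [0..<length ys]"
      have fy': "f_list p K l ys' = f_list p K l ys" unfolding ys'_def by (rule perm_f[OF perm sy])
      have ly'': "length ys' = n" unfolding ys'_def using ly' by simp
      have sy': "set ys' \<subseteq> X"
      proof
        fix y assume "y \<in> set ys'"
        then obtain i where "i < length ys" "y = ys ! \<pi> i" unfolding ys'_def by auto
        then have "\<pi> i < length ys" using permutes_in_image[OF perm] by auto
        then show "y \<in> X" using \<open>y = ys ! \<pi> i\<close> sy by (meson nth_mem subsetD)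
      qed
      have nth: "(\<Sum>i<n. dist (xs ! i) (ys' ! i) powr p) = (\<Sum>i<n. dist (xs ! i) (ys ! \<pi> i) powr p)"
        unfolding ys'_def using ly' by (intro sum.cong) auto
      have "\<bar>f_list p K l xs - f_list p K l ys'\<bar> \<le> 2 * D \<pi>"
        using main_list[OF lx' ly'' nl sx sy'] unfolding nth D_def .
      then show ?thesis unfolding fx fy using fy' d1[OF n0] pi(2) by simp
    qed
  qed
qed


end
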